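(* Let $E$ be a non-empty cohesive almost zero-dimensional space, and let $Y$ be a completely metrizable separable space containing $E$ as a subspace. Then there is a completely metrizable cohesive almost zero-dimensional space $E'$ with $E\subset E'\subset Y$.
   Context: All spaces are separable and metrizable. A subset $A$ of a space $X$ is a C-set in $X$ if $A$ is an intersection of clopen subsets of $X$. A space $X$ is almost zero-dimensional if every point of $X$ has a neighborhood basis consisting of C-sets in $X$. A space $X$ is cohesive if every point $x\in X$ has a neighborhood which contains no non-empty clopen subset of $X$. *)

theory Defs
  imports "HOL-Analysis.Analysis"
begin

definition C_set :: "'a topology \<Rightarrow> 'a set \<Rightarrow> bool" where
  "C_set X A \<longleftrightarrow> (\<exists>\<U>. (\<forall>U\<in>\<U>. closedin X U \<and> openin X U) \<and> A = topspace X \<inter> \<Inter>\<U>)"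

definition almost_zero_dimensional :: "'a topology \<Rightarrow> bool" where
  "almost_zero_dimensional X \<longleftrightarrow>
     (\<forall>x U. openin X U \<and> x \<in> U \<longrightarrow>
        (\<exists>A V. C_set X A \<and> openin X V \<and> x \<in> V \<and> V \<subseteq> A \<and> A \<subseteq> U))"

definition cohesive :: "'a topology \<Rightarrow> bool" where
  "cohesive X \<longleftrightarrow>
     (\<forall>x\<in>topspace X. \<exists>N V. openin X V \<and> x \<in> V \<and> V \<subseteq> N \<and> N \<subseteq> topspace X \<and>
        (\<forall>C. closedin X C \<and> openin X C \<and> C \<noteq> {} \<longrightarrow> \<not> C \<subseteq> N))"

end

theory Submission
  imports Defs
begin

lemma (in Metric_space) sep_sc:
  assumes "separable_space mtopology" shows "second_countable mtopology"
proof -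
  obtain C where C: "countable C" "C \<subseteq> M" "mtopology closure_of C = M"
    using assms by (auto simp: separable_space_def)
  define \<B> where "\<B> = (\<lambda>p. mball (fst p) (1 / Suc (snd p))) ` (C \<times> (UNIV::nat set))"
  have "countable \<B>" using C(1) unfolding \<B>_def by (intro countable_image countable_SIGMA) auto
  moreover have "\<forall>V\<in>\<B>. openin mtopology V" unfolding \<B>_def by (simp add: openin_mball)
  moreover have "\<exists>V\<in>\<B>. x \<in> V \<and> V \<subseteq> U" if oU: "openin mtopology U" and xU: "x \<in> U" for U x
  proof -
    have UM: "U \<subseteq> M \<and> (\<forall>x. x \<in> U \<longrightarrow> (\<exists>r>0. mball x r \<subseteq> U))"
      by (rule iffD1[OF openin_mtopology oU])
    then obtain r where r: "r > 0" "mball x r \<subseteq> U" using xU by blast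
    have xM: "x \<in> M" using UM xU by blast
    have "r/2 > 0" using r by simp
    then obtain n where n: "inverse (real (Suc n)) < r/2"
      using reals_Archimedean by blast
    have "x \<in> mtopology closure_of C" using C xM by simp
    then have cl: "\<forall>r>0. \<exists>y\<in>C. y \<in> mball x r" unfolding metric_closure_of by blast
    have pos: "(1::real) / Suc n > 0" by simp
    obtain c where c: "c \<in> C" "c \<in> mball x (1 / Suc n)"
      using cl pos by blast
    have "x \<in> mball c (1 / Suc n)" using c xM C by (simp add: commute)
    moreover have "mball c (1 / Suc n) \<subseteq> U"
    proof
      fix y assume y: "y \<in> mball c (1 / Suc n)"
      have "d x y \<le> d x c + d c y" using y c xM by (intro triangle) auto
      also have "\<dots> < r"
      proof -
        have "d x c < 1 / Suc n" using c(2) by simp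
        moreover have "d c y < 1 / Suc n" using y by simp
        moreover have "1 / Suc n < r/2" using n by (simp add: inverse_eq_divide)
        ultimately show ?thesis by linarith
      qed
      finally have "y \<in> mball x r" using y xM by simp
      then show "y \<in> U" using r by blast
    qed
    moreover have "mball c (1 / Suc n) \<in> \<B>" unfolding \<B>_def using c by force
    ultimately show ?thesis by blast
  qed
  ultimately show ?thesis unfolding second_countable_def by blast
qed

lemma metrizable_separable_sc:
  assumes "metrizable_space Y" "separable_space Y" shows "second_countable Y"
  using assms Metric_space.sep_sc unfolding metrizable_space_def by metis

lemma countable_subunion:
  assumes "second_countable Z" "\<forall>V\<in>\<V>. openin Z V"
  shows "\<exists>\<W>. countable \<W> \<and> \<W> \<subseteq> \<V> \<and> \<Union>\<W> = \<Union>\<V>"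
proof -
  obtain \<B> where \<B>: "countable \<B>" "\<forall>V \<in> \<B>. openin Z V"
    and *: "\<forall>U x. openin Z U \<and> x \<in> U \<longrightarrow> (\<exists>V \<in> \<B>. x \<in> V \<and> V \<subseteq> U)"
    using assms(1) unfolding second_countable_def by blast
  define \<B>' where "\<B>' = {B \<in> \<B>. \<exists>U. U \<in> \<V> \<and> B \<subseteq> U}"
  have c: "countable \<B>'" using \<B>(1) unfolding \<B>'_def by simp
  have u: "\<Union>\<B>' = \<Union>\<V>"
  proof
    show "\<Union>\<B>' \<subseteq> \<Union>\<V>" unfolding \<B>'_def by blast
    show "\<Union>\<V> \<subseteq> \<Union>\<B>'"
    proof
      fix x assume "x \<in> \<Union>\<V>"
      then obtain U where U: "U \<in> \<V>" "x \<in> U" by blast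
      then obtain V where "V \<in> \<B>" "x \<in> V" "V \<subseteq> U" using * assms(2) by blast
      then show "x \<in> \<Union>\<B>'" unfolding \<B>'_def using U by blast
    qed
  qed
  have "\<forall>b\<in>\<B>'. \<exists>U. U \<in> \<V> \<and> b \<subseteq> U" 
    by (simp add: \<B>'_def)
  then have "\<exists>G. \<forall>b\<in>\<B>'. G b \<in> \<V> \<and> b \<subseteq> G b" by (rule bchoice)
  then obtain G where G: "\<forall>b\<in>\<B>'. G b \<in> \<V> \<and> b \<subseteq> G b" by blast
  have "countable (G ` \<B>')" using c by simp
  moreover have "G ` \<B>' \<subseteq> \<V>" using G by blast
  moreover have "\<Union>(G ` \<B>') = \<Union>\<V>"
  proof
    show "\<Union>(G ` \<B>') \<subseteq> \<Union>\<V>" using G by blast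
    show "\<Union>\<V> \<subseteq> \<Union>(G ` \<B>')" using G u by blast
  qed
  ultimately show ?thesis by blast
qed

lemma C_set_countable:
  assumes "second_countable X" "C_set X A"
  shows "\<exists>\<U>. countable \<U> \<and> (\<forall>U\<in>\<U>. closedin X U \<and> openin X U) \<and> A = topspace X \<inter> \<Inter>\<U>"
proof -
  obtain \<U>0 where U0: "\<forall>U\<in>\<U>0. closedin X U \<and> openin X U" "A = topspace X \<inter> \<Inter>\<U>0"
    using assms(2) unfolding C_set_def by blast
  define \<V> where "\<V> = (\<lambda>U. topspace X - U) ` \<U>0"
  have "\<forall>V\<in>\<V>. openin X V"
  proof
    fix V assume "V \<in> \<V>"
    then obtain U where "U \<in> \<U>0" "V = topspace X - U" unfolding \<V>_def by blast
    then show "openin X V" using U0(1) by (simp add: openin_diff)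
  qed
  then have ex: "\<exists>\<W>. countable \<W> \<and> \<W> \<subseteq> \<V> \<and> \<Union>\<W> = \<Union>\<V>"
    by (rule countable_subunion[OF assms(1)])
  then obtain \<W> where W0: "countable \<W> \<and> \<W> \<subseteq> \<V> \<and> \<Union>\<W> = \<Union>\<V>"
    by (rule exE)
  have W: "countable \<W>" "\<W> \<subseteq> \<V>" "\<Union>\<W> = \<Union>\<V>" using W0 by simp_all
  define \<U> where "\<U> = (\<lambda>W. topspace X - W) ` \<W>"
  have sub: "\<U> \<subseteq> \<U>0"
  proof
    fix U assume "U \<in> \<U>"
    then obtain W where W1: "W \<in> \<W>" "U = topspace X - W" unfolding \<U>_def by blast
    have "W \<in> \<V>" using W(2) W1(1) by (rule subsetD)
    then obtain U' where U': "U' \<in> \<U>0" "W = topspace X - U'" unfolding \<V>_def by blast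
    have "U' \<subseteq> topspace X" using U0(1) U'(1) closedin_subset by blast
    then have "U = U'" using W1(2) U'(2) by (simp add: double_diff)
    then show "U \<in> \<U>0" using U'(1) by simp
  qed
  have e1: "topspace X \<inter> \<Inter>\<U> = topspace X - \<Union>\<W>" unfolding \<U>_def by auto
  have e2: "topspace X \<inter> \<Inter>\<U>0 = topspace X - \<Union>\<V>" unfolding \<V>_def by auto
  have "A = topspace X \<inter> \<Inter>\<U>" using e1 e2 W(3) U0(2) by simp
  moreover have "countable \<U>" using W(1) unfolding \<U>_def by simp
  moreover have "\<forall>U\<in>\<U>. closedin X U \<and> openin X U" using sub U0(1) by blast
  ultimately show ?thesis by blast
qed

theorem corollary3p2:
  fixes Y :: "'a topology" and E :: "'a set"
  assumes "completely_metrizable_space Y" and "separable_space Y"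
    and "E \<subseteq> topspace Y" and "E \<noteq> {}"
    and "cohesive (subtopology Y E)"
    and "almost_zero_dimensional (subtopology Y E)"
  shows "\<exists>E'. E \<subseteq> E' \<and> E' \<subseteq> topspace Y \<and>
           completely_metrizable_space (subtopology Y E') \<and>
           separable_space (subtopology Y E') \<and>
           cohesive (subtopology Y E') \<and>
           almost_zero_dimensional (subtopology Y E')"
proof -
  define X where "X = subtopology Y E"
  have tX: "topspace X = E" unfolding X_def using assms(3) by auto
  have cohX: "cohesive X" using assms(5) by (simp add: X_def)
  have azdX: "almost_zero_dimensional X" using assms(6) by (simp add: X_def)
  have metY: "metrizable_space Y" using assms(1) by (rule completely_metrizable_imp_metrizable_space)
  have regY: "regular_space Y" using metY by (rule metrizable_imp_regular_space)
  have scY: "second_countable Y" using metY assms(2) by (rule metrizable_separable_sc)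
  have scX: "second_countable X" unfolding X_def using scY by (rule second_countable_subtopology)
  obtain \<B> where Bc: "countable \<B>" and Bo: "\<forall>V\<in>\<B>. openin Y V"
     and Bb: "\<forall>U x. openin Y U \<and> x \<in> U \<longrightarrow> (\<exists>V\<in>\<B>. x \<in> V \<and> V \<subseteq> U)"
    using scY unfolding second_countable_def by metis
  define good where "good B B2 \<U> \<longleftrightarrow> countable \<U> \<and> (\<forall>U\<in>\<U>. closedin X U \<and> openin X U)
      \<and> E \<inter> B2 \<subseteq> \<Inter>\<U> \<and> E \<inter> \<Inter>\<U> \<subseteq> B" for B B2 \<U>
  define Q where "Q = {p \<in> \<B> \<times> \<B>. \<exists>\<U>. good (fst p) (snd p) \<U>}"
  have QB: "Q \<subseteq> \<B> \<times> \<B>" unfolding Q_def by auto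
  have Qc: "countable Q" using countable_subset[OF QB] Bc by simp
  have "\<forall>q\<in>Q. \<exists>\<U>. good (fst q) (snd q) \<U>" unfolding Q_def by auto
  then have "\<exists>Uf. \<forall>q\<in>Q. good (fst q) (snd q) (Uf q)" by (rule bchoice)
  then obtain Uf where Uf: "\<forall>q\<in>Q. good (fst q) (snd q) (Uf q)" by (rule exE)
  have Uf_c: "countable (Uf q)" and Uf_clo: "\<forall>U\<in>Uf q. closedin X U \<and> openin X U"
    and Uf_1: "E \<inter> snd q \<subseteq> \<Inter>(Uf q)" and Uf_2: "E \<inter> \<Inter>(Uf q) \<subseteq> fst q" if "q \<in> Q" for q
    using Uf that unfolding good_def by auto
  define \<C> where "\<C> = \<Union>(Uf ` Q)"
  have sUf: "Uf q \<subseteq> \<C>" if "q \<in> Q" for q using that unfolding \<C>_def by auto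
  have Cc: "countable \<C>" unfolding \<C>_def using Qc Uf_c by auto
  have Cclo: "closedin X C \<and> openin X C" if "C \<in> \<C>" for C
    using that Uf_clo unfolding \<C>_def by auto
  have "\<forall>C\<in>\<C>. \<exists>gh. openin Y (fst gh) \<and> openin Y (snd gh) \<and> E \<inter> fst gh = C \<and> E \<inter> snd gh = E - C"
  proof
    fix C assume "C \<in> \<C>"
    then have o: "openin X C" and c: "closedin X C" using Cclo by auto
    from o obtain G0 where G0: "openin Y G0" "C = G0 \<inter> E" unfolding X_def openin_subtopology by auto
    from c have "openin X (E - C)" using tX by (simp add: closedin_def)
    then obtain H0 where H0: "openin Y H0" "E - C = H0 \<inter> E" unfolding X_def openin_subtopology by auto
    show "\<exists>gh. openin Y (fst gh) \<and> openin Y (snd gh) \<and> E \<inter> fst gh = C \<and> E \<inter> snd gh = E - C"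
      using G0 H0 by (intro exI[of _ "(G0,H0)"]) auto
  qed
  then have "\<exists>gh. \<forall>C\<in>\<C>. openin Y (fst (gh C)) \<and> openin Y (snd (gh C)) \<and> E \<inter> fst (gh C) = C \<and> E \<inter> snd (gh C) = E - C"
    by (rule bchoice)
  then obtain gh where gh: "\<forall>C\<in>\<C>. openin Y (fst (gh C)) \<and> openin Y (snd (gh C)) \<and> E \<inter> fst (gh C) = C \<and> E \<inter> snd (gh C) = E - C"
    by (rule exE)
  define G where "G C = fst (gh C)" for C
  define H where "H C = snd (gh C)" for C
  have GoY: "openin Y (G C)" and HoY: "openin Y (H C)" and EG: "E \<inter> G C = C" and EH: "E \<inter> H C = E - C"
    if "C \<in> \<C>" for C
    using gh that unfolding G_def H_def by auto
  define good2 where "good2 W \<longleftrightarrow> openin Y W \<and> (\<forall>C. closedin X C \<and> openin X C \<and> C \<noteq> {} \<longrightarrow> \<not> C \<subseteq> E \<inter> W)" for W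
  define Oc where "Oc = \<Union>{W. good2 W}"
  have Oo: "openin Y Oc" unfolding Oc_def by (rule openin_Union) (simp add: good2_def)
  have EO: "E \<subseteq> Oc"
  proof
    fix y assume "y \<in> E"
    then have "y \<in> topspace X" using tX by simp
    then obtain N V where NV: "openin X V" "y \<in> V" "V \<subseteq> N" "N \<subseteq> topspace X"
       "\<forall>C. closedin X C \<and> openin X C \<and> C \<noteq> {} \<longrightarrow> \<not> C \<subseteq> N"
      using cohX unfolding cohesive_def by metis
    from NV(1) obtain T0 where T0: "openin Y T0" "V = T0 \<inter> E" unfolding X_def openin_subtopology by auto
    have "E \<inter> T0 \<subseteq> N" using T0(2) NV(3) by auto
    have "good2 T0" unfolding good2_def
    proof (intro conjI allI impI)
      show "openin Y T0" using T0(1) .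
      fix C assume "closedin X C \<and> openin X C \<and> C \<noteq> {}"
      then have "\<not> C \<subseteq> N" using NV(5) by simp
      then show "\<not> C \<subseteq> E \<inter> T0" using \<open>E \<inter> T0 \<subseteq> N\<close> by auto
    qed
    moreover have "y \<in> T0" using NV(2) T0(2) by auto
    ultimately show "y \<in> Oc" unfolding Oc_def by auto
  qed
  define clE where "clE = Y closure_of E"
  define Z where "Z C = (G C \<union> H C) \<inter> (topspace Y - (G C \<inter> H C))" for C
  define K where "K q = topspace Y - \<Union>(H ` Uf q)" for q
  define R where "R q = (topspace Y - K q) \<union> Y closure_of (fst q)" for q
  define T where "T B = (topspace Y - B) \<union> \<Union>{B2. (B,B2) \<in> Q}" for B
  define \<S> where "\<S> = {clE, Oc} \<union> Z ` \<C> \<union> R ` Q \<union> T ` \<B>"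
  define E' where "E' = \<Inter>\<S>"
  have memE': "x \<in> E' \<longleftrightarrow> x \<in> clE \<and> x \<in> Oc \<and> (\<forall>C\<in>\<C>. x \<in> Z C) \<and> (\<forall>q\<in>Q. x \<in> R q) \<and> (\<forall>B\<in>\<B>. x \<in> T B)" for x
    unfolding E'_def \<S>_def by auto
  have E'cl: "E' \<subseteq> clE" using memE' by auto
  have E'Y: "E' \<subseteq> topspace Y" using order_trans[OF E'cl[unfolded clE_def] closure_of_subset_topspace] .
  have tE': "topspace (subtopology Y E') = E'" using E'Y by (rule topspace_subtopology_subset)
  have Kc: "closedin Y (K q)" if "q \<in> Q" for q
  proof -
    have "openin Y (\<Union>(H ` Uf q))" using HoY sUf[OF that] by auto
    then show ?thesis unfolding K_def by auto
  qed
  have gd: "gdelta_in Y E'"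
    unfolding E'_def
  proof (rule gdelta_in_Inter)
    show "countable \<S>" unfolding \<S>_def using Cc Qc Bc by simp
    show "\<S> \<noteq> {}" unfolding \<S>_def by simp
    fix S assume "S \<in> \<S>"
    then consider "S = clE" | "S = Oc" | C where "C \<in> \<C>" "S = Z C" | q where "q \<in> Q" "S = R q"
      | B where "B \<in> \<B>" "S = T B" unfolding \<S>_def by auto
    then show "gdelta_in Y S"
    proof cases
      case 1 then show ?thesis using closed_imp_gdelta_in[OF metY] unfolding clE_def by simp
    next
      case 2 then show ?thesis using open_imp_gdelta_in[OF Oo] by simp
    next
      case (3 C)
      have a: "gdelta_in Y (G C \<union> H C)" using GoY[OF 3(1)] HoY[OF 3(1)] by (intro open_imp_gdelta_in) auto
      have b: "gdelta_in Y (topspace Y - (G C \<inter> H C))"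
        using GoY[OF 3(1)] HoY[OF 3(1)] by (intro closed_imp_gdelta_in[OF metY]) auto
      show ?thesis unfolding 3(2) Z_def using a b by (rule gdelta_in_Int)
    next
      case (4 q)
      have a: "gdelta_in Y (topspace Y - K q)" using Kc[OF 4(1)] by (intro open_imp_gdelta_in) auto
      have b: "gdelta_in Y (Y closure_of (fst q))" by (intro closed_imp_gdelta_in[OF metY]) auto
      show ?thesis unfolding 4(2) R_def using a b by (rule gdelta_in_Un)
    next
      case (5 B)
      have a: "gdelta_in Y (topspace Y - B)" using Bo 5(1) by (intro closed_imp_gdelta_in[OF metY]) auto
      have "openin Y (\<Union>{B2. (B,B2) \<in> Q})" using Bo QB by (intro openin_Union) auto
      then have b: "gdelta_in Y (\<Union>{B2. (B,B2) \<in> Q})" by (rule open_imp_gdelta_in)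
      show ?thesis unfolding 5(2) T_def using a b by (rule gdelta_in_Un)
    qed
  qed
  have EE': "E \<subseteq> E'"
  proof
    fix y assume yE: "y \<in> E"
    have yY: "y \<in> topspace Y" using assms(3) yE by auto
    have "y \<in> clE" using closure_of_subset[OF assms(3)] yE unfolding clE_def by auto
    moreover have "y \<in> Oc" using EO yE by auto
    moreover have "y \<in> Z C" if "C \<in> \<C>" for C
    proof -
      have "y \<in> G C \<longleftrightarrow> y \<in> C" using EG[OF that] yE by auto
      moreover have "y \<in> H C \<longleftrightarrow> y \<notin> C" using EH[OF that] yE by auto
      ultimately show ?thesis using yY unfolding Z_def by auto
    qed
    moreover have "y \<in> R q" if "q \<in> Q" for q
    proof (cases "y \<in> K q")
      case False then show ?thesis using yY unfolding R_def by auto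
    next
      case True
      have "y \<in> C" if "C \<in> Uf q" for C
      proof -
        have CC: "C \<in> \<C>" using that sUf[OF \<open>q \<in> Q\<close>] by auto
        have "y \<notin> H C" using True that unfolding K_def by auto
        then show ?thesis using EH[OF CC] yE by auto
      qed
      then have "y \<in> E \<inter> \<Inter>(Uf q)" using yE by auto
      then have "y \<in> fst q" using Uf_2[OF that] by auto
      moreover have "fst q \<subseteq> topspace Y"
      proof -
        have "fst q \<in> \<B>" using that QB by auto
        then have "openin Y (fst q)" using Bo by auto
        then show ?thesis by (rule openin_subset)
      qed
      ultimately show ?thesis using closure_of_subset[of "fst q" Y] unfolding R_def by auto
    qed
    moreover have "y \<in> T B" if "B \<in> \<B>" for B
    proof (cases "y \<in> B")
      case False then show ?thesis using yY unfolding T_def by auto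
    next
      case True
      have "openin X (B \<inter> E)" unfolding X_def openin_subtopology using Bo that by auto
      moreover have "y \<in> B \<inter> E" using True yE by auto
      ultimately obtain A V where AV: "C_set X A" "openin X V" "y \<in> V" "V \<subseteq> A" "A \<subseteq> B \<inter> E"
        using azdX unfolding almost_zero_dimensional_def by metis
      have "\<exists>\<U>. countable \<U> \<and> (\<forall>U\<in>\<U>. closedin X U \<and> openin X U) \<and> A = topspace X \<inter> \<Inter>\<U>"
        using scX AV(1) by (rule C_set_countable)
      then obtain \<U> where U0: "countable \<U> \<and> (\<forall>U\<in>\<U>. closedin X U \<and> openin X U) \<and> A = topspace X \<inter> \<Inter>\<U>"
        by (rule exE)
      have U: "countable \<U>" "\<forall>U\<in>\<U>. closedin X U \<and> openin X U" "A = E \<inter> \<Inter>\<U>"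
        using U0 tX by simp_all
      from AV(2) obtain W where W: "openin Y W" "V = W \<inter> E" unfolding X_def openin_subtopology by auto
      have yW: "y \<in> W" using W(2) AV(3) by auto
      have "\<exists>V\<in>\<B>. y \<in> V \<and> V \<subseteq> W" using Bb W(1) yW by blast
      then obtain B2 where B2: "B2 \<in> \<B>" "y \<in> B2" "B2 \<subseteq> W" by auto
      have "E \<inter> B2 \<subseteq> \<Inter>\<U>" using B2(3) W(2) AV(4) U(3) by auto
      moreover have "E \<inter> \<Inter>\<U> \<subseteq> B" using AV(5) U(3) by auto
      ultimately have "good B B2 \<U>" unfolding good_def using U(1,2) by simp
      then have "(B,B2) \<in> Q" unfolding Q_def using that B2(1) by auto
      then show ?thesis unfolding T_def using B2(2) by auto
    qed
    ultimately show "y \<in> E'" by (simp add: memE')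
  qed
  have ZE': "y \<in> G C \<longleftrightarrow> y \<notin> H C" if "C \<in> \<C>" "y \<in> E'" for C y
    using that memE' unfolding Z_def by auto
  have dens: "y \<in> G C" if q: "q \<in> Q" and y: "y \<in> E'" "y \<in> snd q" and C: "C \<in> Uf q" for q y C
  proof (rule ccontr)
    assume "y \<notin> G C"
    have CC: "C \<in> \<C>" using sUf[OF q] C by auto
    have yH: "y \<in> H C" using ZE'[OF CC y(1)] \<open>y \<notin> G C\<close> by auto
    have "snd q \<in> \<B>" using q QB by auto
    then have "openin Y (snd q)" using Bo by auto
    then have "openin Y (H C \<inter> snd q)" using HoY[OF CC] by (intro openin_Int)
    moreover have "y \<in> Y closure_of E" using y(1) E'cl unfolding clE_def by auto
    ultimately obtain z where z: "z \<in> E" "z \<in> H C \<inter> snd q" using yH y(2) unfolding in_closure_of by auto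
    then have "z \<in> C" using Uf_1[OF q] C by auto
    then show False using z EH[OF CC] by auto
  qed
  have azd: "almost_zero_dimensional (subtopology Y E')"
    unfolding almost_zero_dimensional_def
  proof (intro allI impI, elim conjE)
    fix x U assume U: "openin (subtopology Y E') U" "x \<in> U"
    then obtain UY where UY: "openin Y UY" "U = UY \<inter> E'" unfolding openin_subtopology by auto
    have xE': "x \<in> E'" and xUY: "x \<in> UY" using U UY by auto
    have xY: "x \<in> topspace Y" using xE' E'Y by auto
    have "closedin Y (topspace Y - UY)" using UY(1) by auto
    moreover have "x \<in> topspace Y - (topspace Y - UY)" using xY xUY by auto
    ultimately obtain V where V: "openin Y V" "x \<in> V" "disjnt (topspace Y - UY) (Y closure_of V)"
      using regY unfolding regular_space by metis
    have clV: "Y closure_of V \<subseteq> UY" using V(3) closure_of_subset_topspace[of Y V] unfolding disjnt_def by auto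
    have "\<exists>B\<in>\<B>. x \<in> B \<and> B \<subseteq> V" using Bb V(1,2) by blast
    then obtain B where B: "B \<in> \<B>" "x \<in> B" "B \<subseteq> V" by auto
    have clB: "Y closure_of B \<subseteq> UY" using closure_of_mono[OF B(3)] clV by auto
    have "x \<in> T B" using xE' memE' B(1) by auto
    then obtain B2 where B2: "(B,B2) \<in> Q" "x \<in> B2" using B(2) unfolding T_def by auto
    define q where "q = (B,B2)"
    have q: "q \<in> Q" using B2(1) q_def by simp
    define \<A> where "\<A> = (\<lambda>C. E' \<inter> G C) ` Uf q"
    define A' where "A' = E' \<inter> \<Inter>\<A>"
    define V' where "V' = E' \<inter> B2"
    have "C_set (subtopology Y E') A'"
      unfolding C_set_def
    proof (intro exI conjI)
      show "\<forall>U\<in>\<A>. closedin (subtopology Y E') U \<and> openin (subtopology Y E') U"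
      proof
        fix U assume "U \<in> \<A>"
        then obtain C where C: "C \<in> Uf q" "U = E' \<inter> G C" unfolding \<A>_def by auto
        have CC: "C \<in> \<C>" using sUf[OF q] C(1) by auto
        have "U = G C \<inter> E'" using C(2) by auto
        then have o: "openin (subtopology Y E') U" unfolding openin_subtopology using GoY[OF CC] by auto
        have "U = (topspace Y - H C) \<inter> E'" using C(2) ZE'[OF CC] E'Y by auto
        moreover have "closedin Y (topspace Y - H C)" using HoY[OF CC] by auto
        ultimately have "closedin (subtopology Y E') U" unfolding closedin_subtopology by auto
        with o show "closedin (subtopology Y E') U \<and> openin (subtopology Y E') U" by simp
      qed
      show "A' = topspace (subtopology Y E') \<inter> \<Inter>\<A>" using tE' unfolding A'_def by simp
    qed
    moreover have "openin (subtopology Y E') V'"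
    proof -
      have "B2 \<in> \<B>" using B2(1) QB by auto
      then have "openin Y B2" using Bo by auto
      then show ?thesis unfolding openin_subtopology V'_def by auto
    qed
    moreover have "x \<in> V'" using xE' B2(2) unfolding V'_def by auto
    moreover have "V' \<subseteq> A'"
    proof
      fix y assume y: "y \<in> V'"
      have "y \<in> G C" if "C \<in> Uf q" for C
        using dens[OF q, of y C] y that unfolding V'_def q_def by auto
      then have "\<forall>S\<in>\<A>. y \<in> S" using y unfolding \<A>_def V'_def by auto
      then show "y \<in> A'" using y unfolding A'_def V'_def by auto
    qed
    moreover have "A' \<subseteq> U"
    proof
      fix y assume y: "y \<in> A'"
      have yE': "y \<in> E'" using y unfolding A'_def by auto
      have "y \<notin> H C" if "C \<in> Uf q" for C
      proof -
        have CC: "C \<in> \<C>" using sUf[OF q] that by auto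
        have "E' \<inter> G C \<in> \<A>" unfolding \<A>_def using that by (rule imageI)
        moreover have "y \<in> \<Inter>\<A>" using y unfolding A'_def by simp
        ultimately have "y \<in> E' \<inter> G C" by (rule InterD[rotated])
        then have "y \<in> G C" by simp
        then show ?thesis using ZE'[OF CC yE'] by auto
      qed
      then have "y \<in> K q" unfolding K_def using yE' E'Y by auto
      moreover have "y \<in> R q" using yE' memE' q by auto
      ultimately have "y \<in> Y closure_of B" unfolding R_def q_def by auto
      then show "y \<in> U" using clB UY(2) yE' by auto
    qed
    ultimately show "\<exists>A V. C_set (subtopology Y E') A \<and> openin (subtopology Y E') V \<and> x \<in> V \<and> V \<subseteq> A \<and> A \<subseteq> U"
      by blast
  qed
  have sXE: "subtopology (subtopology Y E') E = X"
  proof -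
    have "E' \<inter> E = E" using EE' by auto
    then show ?thesis unfolding X_def subtopology_subtopology by simp
  qed
  have coh: "cohesive (subtopology Y E')"
    unfolding cohesive_def
  proof
    fix x assume "x \<in> topspace (subtopology Y E')"
    then have xE': "x \<in> E'" using tE' by simp
    then have "x \<in> Oc" using memE' by auto
    then obtain W where W: "good2 W" "x \<in> W" unfolding Oc_def by auto
    have Wo: "openin Y W" using W(1) unfolding good2_def by simp
    show "\<exists>N V. openin (subtopology Y E') V \<and> x \<in> V \<and> V \<subseteq> N \<and> N \<subseteq> topspace (subtopology Y E') \<and>
        (\<forall>C. closedin (subtopology Y E') C \<and> openin (subtopology Y E') C \<and> C \<noteq> {} \<longrightarrow> \<not> C \<subseteq> N)"
    proof (intro exI conjI allI impI)
      show "openin (subtopology Y E') (W \<inter> E')" unfolding openin_subtopology using Wo by auto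
      show "x \<in> W \<inter> E'" using W(2) xE' by simp
      show "W \<inter> E' \<subseteq> W \<inter> E'" by simp
      show "W \<inter> E' \<subseteq> topspace (subtopology Y E')" using tE' by simp
      fix C' assume C': "closedin (subtopology Y E') C' \<and> openin (subtopology Y E') C' \<and> C' \<noteq> {}"
      show "\<not> C' \<subseteq> W \<inter> E'"
      proof
        assume sub: "C' \<subseteq> W \<inter> E'"
        have "\<exists>T. closedin (subtopology Y E') T \<and> C' \<inter> E = T \<inter> E" using C' by auto
        then have "closedin (subtopology (subtopology Y E') E) (C' \<inter> E)"
          by (rule iffD2[OF closedin_subtopology])
        then have c: "closedin X (C' \<inter> E)" using sXE by simp
        have "\<exists>T. openin (subtopology Y E') T \<and> C' \<inter> E = T \<inter> E" using C' by auto
        then have "openin (subtopology (subtopology Y E') E) (C' \<inter> E)"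
          by (rule iffD2[OF openin_subtopology])
        then have o: "openin X (C' \<inter> E)" using sXE by simp
        obtain T0 where T0: "openin Y T0" "C' = T0 \<inter> E'" using C' unfolding openin_subtopology by auto
        obtain p where p: "p \<in> C'" using C' by auto
        have "p \<in> Y closure_of E" using p sub E'cl unfolding clE_def by auto
        moreover have "p \<in> T0" using p T0(2) by auto
        ultimately obtain z where z: "z \<in> E" "z \<in> T0" using T0(1) unfolding in_closure_of by auto
        have "z \<in> C' \<inter> E" using z EE' T0(2) by auto
        then have ne: "C' \<inter> E \<noteq> {}" by auto
        have "C' \<inter> E \<subseteq> E \<inter> W" using sub by auto
        moreover have "\<forall>C. closedin X C \<and> openin X C \<and> C \<noteq> {} \<longrightarrow> \<not> C \<subseteq> E \<inter> W"
          using W(1) unfolding good2_def by simp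
        ultimately show False using c o ne by simp
      qed
    qed
  qed
  have "second_countable (subtopology Y E')" using scY by (rule second_countable_subtopology)
  then have sep: "separable_space (subtopology Y E')" by (rule second_countable_imp_separable_space)
  have cm: "completely_metrizable_space (subtopology Y E')"
    using assms(1) gd by (rule completely_metrizable_space_gdelta_in)
  show ?thesis using EE' E'Y cm sep coh azd by blast
qed
end
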